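(* For every $n\in\mathbb{N}$, $\mathcal{D}_{p/q}(\mu_n)=\mu_{n+1}$.
   Context: Let $p>q>1$ be coprime integers, $A_p=\{0,\dots,p-1\}$, $A_q=\{0,\dots,q-1\}$ and $B=\{p-(2q-1),\dots,p-1\}$. For $n\in\mathbb{N}$ and $a\in\mathbb{Z}$, let $\tau(n,a)=\frac{np+a}{q}$, defined only when $q$ divides $np+a$. Let $\mathcal{T}_{p/q}$ be the deterministic automaton with state set $\mathbb{N}$, alphabet $A_p$, initial state $0$, and transitions $n\xrightarrow{a}\tau(n,a)$ for $a\in A_p$ with $\tau(n,a)$ defined. Every state $n$ has exactly one outgoing transition labelled by a letter of $A_q$; the minimal word $\mu_n\in A_q^{\omega}$ is the unique infinite word over $A_q$ labelling a path of $\mathcal{T}_{p/q}$ starting at state $n$. For $a\in B$ let $\omega(a)=\{(b,c)\in A_q\times A_q : c-b=a-(p-q)\}$. The transducer $\mathcal{D}_{p/q}$ has state set $\mathbb{N}$, input and output alphabet $A_q$, initial state $0$, and a transition $n\xrightarrow{b|c}\tau(n,a)$ (input $b$, output $c$) for every $n\in\mathbb{N}$, $a\in B$ with $\tau(n,a)$ defined, and $(b,c)\in\omega(a)$; no other transitions. The image $\mathcal{D}_{p/q}(w)$ of an infinite word $w$ is the infinite word $w'$ such that for every finite prefix $u$ of $w$, the output produced along the path from state $0$ reading input $u$ is a prefix of $w'$. *)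

theory Defs
  imports Main
begin

text \<open>Infinite words over a digit alphabet are functions nat \<Rightarrow> nat.
  Parameters p, q are naturals with p > q > 1 coprime (assumed in the theorem).\<close>

text \<open>Transition of the automaton T_{p/q}: n --a--> m iff a \<in> A_p and
  q * m = n * p + a (i.e. q divides n p + a and m = tau(n,a)).\<close>
definition T_trans :: "nat \<Rightarrow> nat \<Rightarrow> nat \<Rightarrow> nat \<Rightarrow> nat \<Rightarrow> bool" where
  "T_trans p q n a m \<longleftrightarrow> a < p \<and> int q dvd (int n * int p + int a)
      \<and> int m = (int n * int p + int a) div int q"

definition T_path :: "nat \<Rightarrow> nat \<Rightarrow> nat \<Rightarrow> (nat \<Rightarrow> nat) \<Rightarrow> bool" where
  "T_path p q n w \<longleftrightarrow> (\<exists>s. s 0 = n \<and> (\<forall>i. T_trans p q (s i) (w i) (s (Suc i))))"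

text \<open>The minimal word mu_n: the unique infinite word over A_q labelling a path from n.\<close>
definition min_word :: "nat \<Rightarrow> nat \<Rightarrow> nat \<Rightarrow> (nat \<Rightarrow> nat)" where
  "min_word p q n = (THE w. (\<forall>i. w i < q) \<and> T_path p q n w)"

definition B_set :: "nat \<Rightarrow> nat \<Rightarrow> int set" where
  "B_set p q = {int p - (2 * int q - 1) .. int p - 1}"

text \<open>Transition of the transducer D_{p/q}: n --b|c--> m iff there is a \<in> B with
  tau(n,a) defined and equal to m, and (b,c) \<in> omega(a).\<close>
definition D_trans :: "nat \<Rightarrow> nat \<Rightarrow> nat \<Rightarrow> nat \<Rightarrow> nat \<Rightarrow> nat \<Rightarrow> bool" where
  "D_trans p q n b c m \<longleftrightarrow> (\<exists>a \<in> B_set p q.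
      int q dvd (int n * int p + a) \<and> int m = (int n * int p + a) div int q
      \<and> b < q \<and> c < q \<and> int c - int b = a - (int p - int q))"

definition D_run :: "nat \<Rightarrow> nat \<Rightarrow> (nat \<Rightarrow> nat) \<Rightarrow> nat \<Rightarrow> (nat \<Rightarrow> nat) \<Rightarrow> (nat \<Rightarrow> nat) \<Rightarrow> bool" where
  "D_run p q w k s c \<longleftrightarrow> s 0 = 0 \<and> (\<forall>i<k. D_trans p q (s i) (w i) (c i) (s (Suc i)))"

definition D_image :: "nat \<Rightarrow> nat \<Rightarrow> (nat \<Rightarrow> nat) \<Rightarrow> (nat \<Rightarrow> nat) \<Rightarrow> bool" where
  "D_image p q w w' \<longleftrightarrow> (\<forall>k. (\<exists>s c. D_run p q w k s c) \<and>
      (\<forall>s c. D_run p q w k s c \<longrightarrow> (\<forall>i<k. c i = w' i)))"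

end

theory Submission
  imports Defs
begin

definition dg :: "nat \<Rightarrow> nat \<Rightarrow> nat \<Rightarrow> nat" where
  "dg p q m = (q - (m*p) mod q) mod q"

fun st :: "nat \<Rightarrow> nat \<Rightarrow> nat \<Rightarrow> nat \<Rightarrow> nat" where
  "st p q n 0 = n"
| "st p q n (Suc i) = (st p q n i * p + dg p q (st p q n i)) div q"

lemma dg_lt: "q > 0 \<Longrightarrow> dg p q m < q"
  by (simp add: dg_def)

lemma dg_dvd: "q > 0 \<Longrightarrow> q dvd m*p + dg p q m"
proof -
  assume q: "q > 0"
  define r where "r = (m*p) mod q"
  have r: "r < q" using q by (simp add: r_def)
  have e: "m*p = q*(m*p div q) + r" by (simp add: r_def)
  show ?thesis
  proof (cases "r = 0")
    case True
    then show ?thesis by (simp add: dg_def r_def dvd_eq_mod_eq_0)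
  next
    case False
    then have "dg p q m = q - r" using r by (simp add: dg_def r_def[symmetric])
    then have "m*p + dg p q m = q*(m*p div q + 1)" using e r by simp
    then show ?thesis by simp
  qed
qed

lemma small_dvd: "(k::int) dvd x \<Longrightarrow> \<bar>x\<bar> < k \<Longrightarrow> x = 0"
  by (cases "x = 0") (auto dest: dvd_imp_le_int)

lemma dg_unique: "q > 0 \<Longrightarrow> a < q \<Longrightarrow> q dvd m*p + a \<Longrightarrow> a = dg p q m"
proof -
  assume q: "q > 0" and a: "a < q" and d: "q dvd m*p + a"
  have d2: "q dvd m*p + dg p q m" and b: "dg p q m < q" using dg_dvd dg_lt q by auto
  have "int q dvd int (m*p+a) - int (m*p + dg p q m)"
    using d d2 by (metis dvd_diff of_nat_dvd_iff)
  then have "int q dvd int a - int (dg p q m)" by simp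
  moreover have "\<bar>int a - int (dg p q m)\<bar> < int q" using a b by auto
  ultimately have "int a - int (dg p q m) = 0" by (rule small_dvd)
  then show ?thesis by simp
qed

lemma st_mult: "q > 0 \<Longrightarrow> q * st p q n (Suc i) = st p q n i * p + dg p q (st p q n i)"
  using dg_dvd[of q "st p q n i" p] by simp

lemma T_trans_nat: "T_trans p q m a m' \<longleftrightarrow> a < p \<and> q dvd m*p + a \<and> m' = (m*p+a) div q"
proof -
  have "int m * int p + int a = int (m*p+a)" by simp
  then show ?thesis unfolding T_trans_def
    by (metis of_nat_dvd_iff of_nat_eq_iff zdiv_int)
qed

lemma min_word_eq:
  assumes q: "q > 1" and pq: "p > q"
  shows "min_word p q n = (\<lambda>i. dg p q (st p q n i))"
  unfolding min_word_def
proof (rule the_equality)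
  show "(\<forall>i. dg p q (st p q n i) < q) \<and> T_path p q n (\<lambda>i. dg p q (st p q n i))"
    unfolding T_path_def using q pq dg_lt[of q p] dg_dvd[of q _ p]
    by (auto intro!: exI[of _ "st p q n"] simp: T_trans_nat intro: less_trans)
next
  fix w assume w: "(\<forall>i. w i < q) \<and> T_path p q n w"
  then obtain s where s0: "s 0 = n" and sT: "\<And>i. T_trans p q (s i) (w i) (s (Suc i))"
    unfolding T_path_def by blast
  have "s i = st p q n i \<and> w i = dg p q (st p q n i)" for i
  proof (induction i)
    case 0
    then show ?case using s0 sT[of 0] w q by (auto simp: T_trans_nat intro: dg_unique)
  next
    case (Suc i)
    then have "s (Suc i) = st p q n (Suc i)" using sT[of i] by (simp add: T_trans_nat)
    then show ?case using sT[of "Suc i"] w q by (auto simp: T_trans_nat intro: dg_unique)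
  qed
  then show "w = (\<lambda>i. dg p q (st p q n i))" by auto
qed

lemma st_less:
  assumes q: "q > 1" and pq: "p > q"
  shows "st p q n i < st p q (Suc n) i"
proof (induction i)
  case 0 then show ?case by simp
next
  case (Suc i)
  let ?s = "st p q n i" and ?t = "st p q (Suc n) i"
  have "?t \<ge> ?s + 1" using Suc by simp
  then have "?t * p \<ge> ?s * p + p" by (metis add_mult_distrib mult_1 mult_le_mono1)
  moreover have "dg p q ?s < q" using q dg_lt by simp
  ultimately have "?s * p + dg p q ?s < ?t * p + dg p q ?t" using pq by linarith
  then have "q * st p q n (Suc i) < q * st p q (Suc n) (Suc i)"
    using st_mult[of q p n i] st_mult[of q p "Suc n" i] q by simp
  then show ?case by simp
qed

theorem mainTheorem3:
  fixes p q n :: nat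
  assumes "q > 1" and "p > q" and "coprime p q"
  shows "D_image p q (min_word p q n) (min_word p q (Suc n))"
proof -
  have q: "q > 1" and pq: "p > q" by fact+
  define s where "s = st p q n"
  define t where "t = st p q (Suc n)"
  define b where "b = (\<lambda>i. dg p q (s i))"
  define c where "c = (\<lambda>i. dg p q (t i))"
  define d where "d = (\<lambda>i. t i - s i - 1)"
  have mw: "min_word p q n = b" "min_word p q (Suc n) = c"
    using min_word_eq[OF q pq] by (auto simp: b_def c_def s_def t_def)
  have lt: "s i < t i" for i using st_less[OF q pq] by (simp add: s_def t_def)
  have di: "int (d i) = int (t i) - int (s i) - 1" for i using lt[of i] by (simp add: d_def)
  have bq: "b i < q" and cq: "c i < q" for i using q dg_lt by (auto simp: b_def c_def)
  have sm: "int q * int (s (Suc i)) = int (s i) * int p + int (b i)" for i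
  proof -
    have "q * s (Suc i) = s i * p + b i" using st_mult[of q p n i] q by (simp add: s_def b_def)
    then have "int (q * s (Suc i)) = int (s i * p + b i)" by (rule arg_cong)
    then show ?thesis by simp
  qed
  have tm: "int q * int (t (Suc i)) = int (t i) * int p + int (c i)" for i
  proof -
    have "q * t (Suc i) = t i * p + c i" using st_mult[of q p "Suc n" i] q by (simp add: t_def c_def)
    then have "int (q * t (Suc i)) = int (t i * p + c i)" by (rule arg_cong)
    then show ?thesis by simp
  qed
  define a where "a = (\<lambda>i. int (c i) - int (b i) + int p - int q)"
  have key: "int (d i) * int p + a i = int q * int (d (Suc i))" for i
  proof -
    have "int (d i) * int p + a i = (int (t i) * int p + int (c i)) - (int (s i) * int p + int (b i)) - int q"
      unfolding a_def di[of i] by (simp add: algebra_simps)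
    also have "\<dots> = int q * (int (t (Suc i)) - int (s (Suc i)) - 1)"
      unfolding sm[symmetric] tm[symmetric] by (simp add: algebra_simps)
    finally show ?thesis unfolding di[of "Suc i"] .
  qed
  have aB: "a i \<in> B_set p q" for i
  proof -
    have "int (b i) < int q" "int (c i) < int q" using bq[of i] cq[of i] by auto
    then show ?thesis unfolding a_def B_set_def atLeastAtMost_iff by linarith
  qed
  have trans: "D_trans p q (d i) (b i) (c i) (d (Suc i))" for i
    unfolding D_trans_def
  proof (rule bexI[OF _ aB[of i]], intro conjI)
    show "int q dvd int (d i) * int p + a i" unfolding key by simp
    show "int (d (Suc i)) = (int (d i) * int p + a i) div int q" unfolding key using q by simp
  qed (auto simp: bq cq a_def)
  have uniq: "x = c i \<and> y = d (Suc i)" if tr: "D_trans p q (d i) (b i) x y" for i x y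
  proof -
    obtain a' where dv: "int q dvd int (d i) * int p + a'" and xq: "x < q"
      and ya: "int y = (int (d i) * int p + a') div int q"
      and xa: "int x - int (b i) = a' - (int p - int q)"
      using tr unfolding D_trans_def by blast
    have "int q dvd (int (d i) * int p + a') - (int (d i) * int p + a i)"
      using dv key[of i] by (metis dvd_diff dvd_triv_left)
    moreover have "(int (d i) * int p + a') - (int (d i) * int p + a i) = int x - int (c i)"
      using xa unfolding a_def by simp
    ultimately have "int q dvd int x - int (c i)" by simp
    moreover have "\<bar>int x - int (c i)\<bar> < int q" using xq cq[of i] by auto
    ultimately have "int x - int (c i) = 0" by (rule small_dvd)
    then have xc: "x = c i" by simp
    then have "a' = a i" using xa unfolding a_def by simp
    then have "int y = int (d (Suc i))" using ya key[of i] q by simp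
    then show ?thesis using xc by simp
  qed
  have d0: "d 0 = 0" by (simp add: d_def s_def t_def)
  show ?thesis unfolding D_image_def mw
  proof (rule allI, rule conjI)
    fix k show "\<exists>s c. D_run p q b k s c"
      using trans d0 unfolding D_run_def by blast
  next
    fix k show "\<forall>sd cc. D_run p q b k sd cc \<longrightarrow> (\<forall>i<k. cc i = c i)"
    proof (intro allI impI)
      fix sd cc i assume r: "D_run p q b k sd cc" and ik: "i < k"
      have "j \<le> k \<longrightarrow> sd j = d j" for j
      proof (induction j)
        case 0
        then show ?case using r d0 by (simp add: D_run_def)
      next
        case (Suc i)
        show ?case
        proof
          assume "Suc i \<le> k"
          then have "D_trans p q (d i) (b i) (cc i) (sd (Suc i))"
            using r Suc unfolding D_run_def by (metis Suc_le_lessD Suc_leD)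
          then show "sd (Suc i) = d (Suc i)" using uniq by blast
        qed
      qed
      note IH = this
      have "sd i = d i" using IH[of i] ik by simp
      moreover have "D_trans p q (sd i) (b i) (cc i) (sd (Suc i))" using r ik by (simp add: D_run_def)
      ultimately show "cc i = c i" using uniq by metis
    qed
  qed
qed

end
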